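(* Let $\Bbbk$ be a field, $H$ a Hopf $\Bbbk$-algebra with bijective antipode, and $A$ a left $H$-module $\Bbbk$-algebra. Equip $\operatorname{Spec} A$ with the Jacobson-Zariski topology and $H\text{-}\operatorname{Spec} A$ with the topology whose closed sets are $V_H(S)=\{Q\in H\text{-}\operatorname{Spec} A \mid Q\supseteq S\}$, $S\subseteq A$. Let $\kappa_H\colon \operatorname{Spec} A\to H\text{-}\operatorname{Spec} A$, $P\mapsto P\!:\!H$. Then: (a) $\kappa_H$ is continuous. (b) If all $H$-prime ideals of $A$ are prime, then the topology of $H\text{-}\operatorname{Spec} A$ is the initial (subspace) topology for the inclusion map $H\text{-}\operatorname{Spec} A \hookrightarrow \operatorname{Spec} A$. (c) If $\kappa_H$ is surjective and $\bigcap \operatorname{Spec}_I A = I$ for all $I \in H\text{-}\operatorname{Spec} A$, where $\operatorname{Spec}_I A=\kappa_H^{-1}(I)$, then the topology of $H\text{-}\operatorname{Spec} A$ is the final (quotient) topology for $\kappa_H$.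
   Context: A left $H$-module algebra is a $\Bbbk$-algebra $A$ with $1$ that is a left $H$-module via $h\otimes a\mapsto h.a$ such that $h.(ab)=(h_1.a)(h_2.b)$ and $h.1=\varepsilon(h)1$. An $H$-ideal is a two-sided ideal which is an $H$-submodule; an $H$-ideal $I$ is $H$-prime if $A/I\ne0$ and the product of any two nonzero $H$-ideals of $A/I$ is nonzero. $H\text{-}\operatorname{Spec} A$ is the set of $H$-prime ideals of $A$. For an ideal $P$, $P\!:\!H=\{a\in A\mid H.a\subseteq P\}$, the largest $H$-ideal contained in $P$; if $P$ is prime then $P\!:\!H$ is $H$-prime. The Jacobson-Zariski topology on $\operatorname{Spec} A$ has closed sets $V(S)=\{P\in\operatorname{Spec} A\mid P\supseteq S\}$. *)

theory Defs
  imports "HOL-Analysis.Analysis"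
begin

definition k_algebra :: "('k::field \<Rightarrow> 'r::ring_1 \<Rightarrow> 'r) \<Rightarrow> bool" where
  "k_algebra s \<longleftrightarrow> vector_space s \<and>
     (\<forall>c x y. s c (x * y) = s c x * y \<and> s c (x * y) = x * s c y)"

text \<open>An element of V\<otimes>V (resp. V\<otimes>V\<otimes>V) is represented by a list of pairs
(resp. triples) standing for the sum of the corresponding simple tensors.  Over a
field, two such sums are equal in the tensor product iff every k-bilinear
(resp. trilinear) form takes the same value on them.\<close>

definition bilinear_form :: "('k::field \<Rightarrow> 'v::ab_group_add \<Rightarrow> 'v) \<Rightarrow> ('v \<Rightarrow> 'v \<Rightarrow> 'k) \<Rightarrow> bool" where
  "bilinear_form s \<beta> \<longleftrightarrow>
     (\<forall>x y z. \<beta> (x + y) z = \<beta> x z + \<beta> y z \<and> \<beta> z (x + y) = \<beta> z x + \<beta> z y) \<and>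
     (\<forall>c x y. \<beta> (s c x) y = c * \<beta> x y \<and> \<beta> x (s c y) = c * \<beta> x y)"

definition trilinear_form :: "('k::field \<Rightarrow> 'v::ab_group_add \<Rightarrow> 'v) \<Rightarrow> ('v \<Rightarrow> 'v \<Rightarrow> 'v \<Rightarrow> 'k) \<Rightarrow> bool" where
  "trilinear_form s \<tau> \<longleftrightarrow>
     (\<forall>x y u v. \<tau> (x + y) u v = \<tau> x u v + \<tau> y u v \<and>
                \<tau> u (x + y) v = \<tau> u x v + \<tau> u y v \<and>
                \<tau> u v (x + y) = \<tau> u v x + \<tau> u v y) \<and>
     (\<forall>c x y z. \<tau> (s c x) y z = c * \<tau> x y z \<and> \<tau> x (s c y) z = c * \<tau> x y z \<and>
                \<tau> x y (s c z) = c * \<tau> x y z)"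

definition tensor_eq2 :: "('k::field \<Rightarrow> 'v::ab_group_add \<Rightarrow> 'v) \<Rightarrow> ('v \<times> 'v) list \<Rightarrow> ('v \<times> 'v) list \<Rightarrow> bool" where
  "tensor_eq2 s xs ys \<longleftrightarrow> (\<forall>\<beta>. bilinear_form s \<beta> \<longrightarrow>
      sum_list (map (\<lambda>(a, b). \<beta> a b) xs) = sum_list (map (\<lambda>(a, b). \<beta> a b) ys))"

definition tensor_eq3 :: "('k::field \<Rightarrow> 'v::ab_group_add \<Rightarrow> 'v) \<Rightarrow> ('v \<times> 'v \<times> 'v) list \<Rightarrow> ('v \<times> 'v \<times> 'v) list \<Rightarrow> bool" where
  "tensor_eq3 s xs ys \<longleftrightarrow> (\<forall>\<tau>. trilinear_form s \<tau> \<longrightarrow>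
      sum_list (map (\<lambda>(a, b, c). \<tau> a b c) xs) = sum_list (map (\<lambda>(a, b, c). \<tau> a b c) ys))"

text \<open>The comultiplication \<Delta> h is given by a Sweedler representative
(list of pairs (h1,h2) with \<Delta> h = \<Sum> h1 \<otimes> h2), all axioms being equalities in the
tensor product.\<close>

definition hopf_algebra ::
  "('k::field \<Rightarrow> 'h::ring_1 \<Rightarrow> 'h) \<Rightarrow> ('h \<Rightarrow> ('h \<times> 'h) list) \<Rightarrow> ('h \<Rightarrow> 'k) \<Rightarrow> ('h \<Rightarrow> 'h) \<Rightarrow> bool" where
  "hopf_algebra s \<Delta> \<epsilon> S \<longleftrightarrow>
     k_algebra s \<and>
     \<comment> \<open>\<Delta> and \<epsilon> are k-linear\<close>
     (\<forall>x y. tensor_eq2 s (\<Delta> (x + y)) (\<Delta> x @ \<Delta> y)) \<and>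
     (\<forall>c x. tensor_eq2 s (\<Delta> (s c x)) (map (\<lambda>(a, b). (s c a, b)) (\<Delta> x))) \<and>
     (\<forall>x y. \<epsilon> (x + y) = \<epsilon> x + \<epsilon> y) \<and>
     (\<forall>c x. \<epsilon> (s c x) = c * \<epsilon> x) \<and>
     \<comment> \<open>coassociativity\<close>
     (\<forall>h. tensor_eq3 s
        (concat (map (\<lambda>(a, b). map (\<lambda>(a1, a2). (a1, a2, b)) (\<Delta> a)) (\<Delta> h)))
        (concat (map (\<lambda>(a, b). map (\<lambda>(b1, b2). (a, b1, b2)) (\<Delta> b)) (\<Delta> h)))) \<and>
     \<comment> \<open>counit\<close>
     (\<forall>h. sum_list (map (\<lambda>(a, b). s (\<epsilon> a) b) (\<Delta> h)) = h \<and>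
          sum_list (map (\<lambda>(a, b). s (\<epsilon> b) a) (\<Delta> h)) = h) \<and>
     \<comment> \<open>\<Delta> and \<epsilon> are algebra maps\<close>
     (\<forall>x y. tensor_eq2 s (\<Delta> (x * y))
        (concat (map (\<lambda>(a, b). map (\<lambda>(c, d). (a * c, b * d)) (\<Delta> y)) (\<Delta> x)))) \<and>
     tensor_eq2 s (\<Delta> 1) [(1, 1)] \<and>
     (\<forall>x y. \<epsilon> (x * y) = \<epsilon> x * \<epsilon> y) \<and> \<epsilon> 1 = 1 \<and>
     \<comment> \<open>antipode: k-linear, convolution inverse of the identity\<close>
     (\<forall>x y. S (x + y) = S x + S y) \<and> (\<forall>c x. S (s c x) = s c (S x)) \<and>
     (\<forall>h. sum_list (map (\<lambda>(a, b). S a * b) (\<Delta> h)) = s (\<epsilon> h) 1 \<and>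
          sum_list (map (\<lambda>(a, b). a * S b) (\<Delta> h)) = s (\<epsilon> h) 1)"

definition hopf_algebra_bij_antipode ::
  "('k::field \<Rightarrow> 'h::ring_1 \<Rightarrow> 'h) \<Rightarrow> ('h \<Rightarrow> ('h \<times> 'h) list) \<Rightarrow> ('h \<Rightarrow> 'k) \<Rightarrow> ('h \<Rightarrow> 'h) \<Rightarrow> bool" where
  "hopf_algebra_bij_antipode s \<Delta> \<epsilon> S \<longleftrightarrow> hopf_algebra s \<Delta> \<epsilon> S \<and> bij S"

definition module_algebra ::
  "('k::field \<Rightarrow> 'h::ring_1 \<Rightarrow> 'h) \<Rightarrow> ('h \<Rightarrow> ('h \<times> 'h) list) \<Rightarrow> ('h \<Rightarrow> 'k) \<Rightarrow>
   ('k \<Rightarrow> 'a::ring_1 \<Rightarrow> 'a) \<Rightarrow> ('h \<Rightarrow> 'a \<Rightarrow> 'a) \<Rightarrow> bool" where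
  "module_algebra sH \<Delta> \<epsilon> sA act \<longleftrightarrow>
     k_algebra sA \<and>
     \<comment> \<open>the action H \<otimes> A \<rightarrow> A is k-bilinear\<close>
     (\<forall>x y a. act (x + y) a = act x a + act y a) \<and>
     (\<forall>c x a. act (sH c x) a = sA c (act x a)) \<and>
     (\<forall>h a b. act h (a + b) = act h a + act h b) \<and>
     (\<forall>c h a. act h (sA c a) = sA c (act h a)) \<and>
     \<comment> \<open>left H-module\<close>
     (\<forall>x y a. act (x * y) a = act x (act y a)) \<and> (\<forall>a. act 1 a = a) \<and>
     \<comment> \<open>module algebra conditions\<close>
     (\<forall>h a b. act h (a * b) = sum_list (map (\<lambda>(h1, h2). act h1 a * act h2 b) (\<Delta> h))) \<and>
     (\<forall>h. act h 1 = sA (\<epsilon> h) 1)"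

definition two_sided_ideal :: "'a::ring_1 set \<Rightarrow> bool" where
  "two_sided_ideal I \<longleftrightarrow> 0 \<in> I \<and> (\<forall>x\<in>I. \<forall>y\<in>I. x + y \<in> I) \<and> (\<forall>x\<in>I. - x \<in> I) \<and>
     (\<forall>x\<in>I. \<forall>r. r * x \<in> I \<and> x * r \<in> I)"

definition ideal_prod :: "'a::ring_1 set \<Rightarrow> 'a set \<Rightarrow> 'a set" where
  "ideal_prod I J = {x. \<exists>(n::nat) f g. (\<forall>i<n. f i \<in> I \<and> g i \<in> J) \<and> x = (\<Sum>i<n. f i * g i)}"

definition prime_ideal :: "'a::ring_1 set \<Rightarrow> bool" where
  "prime_ideal P \<longleftrightarrow> two_sided_ideal P \<and> P \<noteq> UNIV \<and>
     (\<forall>I J. two_sided_ideal I \<and> two_sided_ideal J \<and> ideal_prod I J \<subseteq> P \<longrightarrow> I \<subseteq> P \<or> J \<subseteq> P)"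

definition Spec :: "'a::ring_1 set set" where
  "Spec = {P. prime_ideal P}"

definition H_ideal :: "('h \<Rightarrow> 'a::ring_1 \<Rightarrow> 'a) \<Rightarrow> 'a set \<Rightarrow> bool" where
  "H_ideal act I \<longleftrightarrow> two_sided_ideal I \<and> (\<forall>h. \<forall>x\<in>I. act h x \<in> I)"

text \<open>I is H-prime iff A/I \<noteq> 0 and the product of two nonzero H-ideals of A/I is
nonzero; H-ideals of A/I correspond to H-ideals J of A containing I, J/I being zero
iff J = I, and (J/I)(K/I) = (JK+I)/I.\<close>
definition H_prime :: "('h \<Rightarrow> 'a::ring_1 \<Rightarrow> 'a) \<Rightarrow> 'a set \<Rightarrow> bool" where
  "H_prime act I \<longleftrightarrow> H_ideal act I \<and> I \<noteq> UNIV \<and>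
     (\<forall>J K. H_ideal act J \<and> H_ideal act K \<and> I \<subseteq> J \<and> I \<subseteq> K \<and> ideal_prod J K \<subseteq> I
            \<longrightarrow> J = I \<or> K = I)"

definition H_Spec :: "('h \<Rightarrow> 'a::ring_1 \<Rightarrow> 'a) \<Rightarrow> 'a set set" where
  "H_Spec act = {I. H_prime act I}"

definition colon_H :: "('h \<Rightarrow> 'a \<Rightarrow> 'a) \<Rightarrow> 'a set \<Rightarrow> 'a set" where
  "colon_H act P = {a. \<forall>h. act h a \<in> P}"

definition V_on :: "'a set set \<Rightarrow> 'a set \<Rightarrow> 'a set set" where
  "V_on X S = {Q \<in> X. S \<subseteq> Q}"

definition zariski_topology :: "'a set set \<Rightarrow> 'a set topology" where
  "zariski_topology X = topology_generated_by (insert X {X - V_on X S | S. True})"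

abbreviation spec_top :: "'a::ring_1 set topology" where
  "spec_top \<equiv> zariski_topology Spec"

abbreviation hspec_top :: "('h \<Rightarrow> 'a::ring_1 \<Rightarrow> 'a) \<Rightarrow> 'a set topology" where
  "hspec_top act \<equiv> zariski_topology (H_Spec act)"

end

theory Submission
  imports Defs
begin

lemma ztop_topspace[simp]: "topspace (zariski_topology X) = X"
  unfolding zariski_topology_def topology_generated_by_topspace by (auto simp: V_on_def)

lemma ztop_basic: "openin (zariski_topology X) (X - V_on X S)"
  unfolding zariski_topology_def by (rule topology_generated_by_Basis) blast

lemma ztop_sub:
  assumes "Y \<subseteq> X"
  shows "zariski_topology Y = subtopology (zariski_topology X) Y"
proof -
  have ts: "topspace (subtopology (zariski_topology X) Y) = Y" using assms by auto
  have c1: "continuous_map (zariski_topology Y) (subtopology (zariski_topology X) Y) id"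
  proof (rule continuous_map_into_subtopology)
    show "continuous_map (zariski_topology Y) (zariski_topology X) id"
      unfolding zariski_topology_def[of X]
    proof (rule continuous_on_generated_topo)
      fix U assume "U \<in> insert X {X - V_on X S |S. True}"
      then consider "U = X" | S where "U = X - V_on X S" by blast
      then show "openin (zariski_topology Y) (id -` U \<inter> topspace (zariski_topology Y))"
      proof cases
        case 1
        have "id -` U \<inter> topspace (zariski_topology Y) = topspace (zariski_topology Y)"
          using 1 assms by auto
        then show ?thesis by (simp only: openin_topspace)
      next
        case 2
        have "id -` U \<inter> topspace (zariski_topology Y) = Y - V_on Y S"
          using 2 assms by (auto simp: V_on_def)
        then show ?thesis by (simp add: ztop_basic)
      qed
    next
      show "id ` topspace (zariski_topology Y) \<subseteq> \<Union> (insert X {X - V_on X S |S. True})"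
        using assms by auto
    qed
  qed auto
  have c2: "continuous_map (subtopology (zariski_topology X) Y) (zariski_topology Y) id"
    unfolding zariski_topology_def[of Y]
  proof (rule continuous_on_generated_topo)
    fix U assume "U \<in> insert Y {Y - V_on Y S |S. True}"
    then consider "U = Y" | S where "U = Y - V_on Y S" by blast
    then show "openin (subtopology (zariski_topology X) Y) (id -` U \<inter> topspace (subtopology (zariski_topology X) Y))"
    proof cases
      case 1
      have "id -` U \<inter> topspace (subtopology (zariski_topology X) Y) = topspace (subtopology (zariski_topology X) Y)"
        using 1 ts by auto
      then show ?thesis by (simp only: openin_topspace)
    next
      case 2
      have "id -` U \<inter> topspace (subtopology (zariski_topology X) Y) = (X - V_on X S) \<inter> Y"
        using 2 assms ts by (auto simp: V_on_def)
      then show ?thesis by (simp only:) (rule openin_subtopology_Int[OF ztop_basic])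
    qed
  next
    show "id ` topspace (subtopology (zariski_topology X) Y) \<subseteq> \<Union> (insert Y {Y - V_on Y S |S. True})"
      using ts by auto
  qed
  show ?thesis
  proof (rule topology_eq[THEN iffD2], intro allI iffI)
    fix U assume o: "openin (zariski_topology Y) U"
    then have "openin (subtopology (zariski_topology X) Y) {x \<in> topspace (subtopology (zariski_topology X) Y). id x \<in> U}"
      using c2 unfolding continuous_map_def by blast
    moreover have "U \<subseteq> Y" using openin_subset[OF o] by simp
    moreover have "U \<subseteq> Y \<Longrightarrow> {x \<in> topspace (subtopology (zariski_topology X) Y). id x \<in> U} = U"
      unfolding ts by auto
    ultimately show "openin (subtopology (zariski_topology X) Y) U" by simp
  next
    fix U assume o: "openin (subtopology (zariski_topology X) Y) U"
    then have "openin (zariski_topology Y) {x \<in> topspace (zariski_topology Y). id x \<in> U}"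
      using c1 unfolding continuous_map_def by blast
    moreover have "U \<subseteq> Y" using openin_subset[OF o] ts by simp
    moreover have "U \<subseteq> Y \<Longrightarrow> {x \<in> topspace (zariski_topology Y). id x \<in> U} = U"
      by auto
    ultimately show "openin (zariski_topology Y) U" by simp
  qed
qed


lemma ideal_sum_list:
  assumes "two_sided_ideal P" "\<forall>x\<in>set xs. x \<in> P"
  shows "sum_list xs \<in> P"
  using assms by (induction xs) (auto simp: two_sided_ideal_def)

lemma ideal_sum:
  assumes "two_sided_ideal P" "\<forall>i<(n::nat). f i \<in> P"
  shows "(\<Sum>i<n. f i) \<in> P"
  using assms(2)
proof (induction n)
  case 0 then show ?case using assms(1) by (simp add: two_sided_ideal_def)
next
  case (Suc n) then show ?case using assms(1) by (simp add: two_sided_ideal_def)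
qed

lemma ideal_prod_sub:
  assumes "two_sided_ideal P" "I \<subseteq> P"
  shows "ideal_prod I J \<subseteq> P"
proof
  fix x assume "x \<in> ideal_prod I J"
  then obtain n :: nat and f g where fg: "\<forall>i<n. f i \<in> I \<and> g i \<in> J" "x = (\<Sum>i<n. f i * g i)"
    unfolding ideal_prod_def by blast
  have "\<forall>i<n. f i * g i \<in> P"
  proof (intro allI impI)
    fix i assume "i < n"
    then have "f i \<in> P" using fg(1) assms(2) by blast
    then show "f i * g i \<in> P" using assms(1) unfolding two_sided_ideal_def by blast
  qed
  then show "x \<in> P" using ideal_sum[OF assms(1), of n "\<lambda>i. f i * g i"] fg(2) by simp
qed

definition ideal_gen :: "'a::ring_1 set \<Rightarrow> 'a set" where
  "ideal_gen T = \<Inter>{I. two_sided_ideal I \<and> T \<subseteq> I}"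

lemma ideal_gen_ideal: "two_sided_ideal (ideal_gen T)"
  unfolding two_sided_ideal_def
proof (intro conjI ballI allI)
  show "0 \<in> ideal_gen T" unfolding ideal_gen_def two_sided_ideal_def by simp
next
  fix x y assume "x \<in> ideal_gen T" "y \<in> ideal_gen T"
  then show "x + y \<in> ideal_gen T" unfolding ideal_gen_def two_sided_ideal_def by simp
next
  fix x assume "x \<in> ideal_gen T"
  then show "- x \<in> ideal_gen T" unfolding ideal_gen_def two_sided_ideal_def by simp
next
  fix x r assume "x \<in> ideal_gen T"
  then show "r * x \<in> ideal_gen T" "x * r \<in> ideal_gen T" unfolding ideal_gen_def two_sided_ideal_def by simp_all
qed

lemma ideal_gen_sup: "T \<subseteq> ideal_gen T"
  unfolding ideal_gen_def by blast

lemma ideal_gen_least: "two_sided_ideal P \<Longrightarrow> T \<subseteq> P \<Longrightarrow> ideal_gen T \<subseteq> P"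
  unfolding ideal_gen_def by blast

lemma V_Spec_Un:
  "V_on (Spec::'a::ring_1 set set) T1 \<union> V_on Spec T2 = V_on Spec (ideal_prod (ideal_gen T1) (ideal_gen T2))"
proof (intro equalityI subsetI)
  fix P assume "P \<in> V_on (Spec::'a set set) T1 \<union> V_on Spec T2"
  then have P: "prime_ideal P" "T1 \<subseteq> P \<or> T2 \<subseteq> P" by (auto simp: V_on_def Spec_def)
  have id: "two_sided_ideal P" using P unfolding prime_ideal_def by blast
  show "P \<in> V_on Spec (ideal_prod (ideal_gen T1) (ideal_gen T2))"
    using P(2)
  proof
    assume "T1 \<subseteq> P"
    then show ?thesis using P(1) ideal_prod_sub[OF id ideal_gen_least[OF id]]
      by (simp add: V_on_def Spec_def)
  next
    assume "T2 \<subseteq> P"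
    then have "ideal_gen T2 \<subseteq> P" by (rule ideal_gen_least[OF id])
    have "ideal_prod (ideal_gen T1) (ideal_gen T2) \<subseteq> P"
    proof
      fix x assume "x \<in> ideal_prod (ideal_gen T1) (ideal_gen T2)"
      then obtain n :: nat and f g where fg: "\<forall>i<n. f i \<in> ideal_gen T1 \<and> g i \<in> ideal_gen T2" "x = (\<Sum>i<n. f i * g i)"
        unfolding ideal_prod_def by blast
      have "\<forall>i<n. f i * g i \<in> P"
      proof (intro allI impI)
        fix i assume "i < n"
        then have "g i \<in> P" using fg(1) \<open>ideal_gen T2 \<subseteq> P\<close> by blast
        then show "f i * g i \<in> P" using id unfolding two_sided_ideal_def by blast
      qed
      then show "x \<in> P" using ideal_sum[OF id, of n "\<lambda>i. f i * g i"] fg(2) by simp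
    qed
    then show ?thesis using P(1) by (simp add: V_on_def Spec_def)
  qed
next
  fix P assume "P \<in> V_on (Spec::'a set set) (ideal_prod (ideal_gen T1) (ideal_gen T2))"
  then have P: "prime_ideal P" "ideal_prod (ideal_gen T1) (ideal_gen T2) \<subseteq> P"
    by (auto simp: V_on_def Spec_def)
  then have "ideal_gen T1 \<subseteq> P \<or> ideal_gen T2 \<subseteq> P"
    using ideal_gen_ideal unfolding prime_ideal_def by blast
  then have "T1 \<subseteq> P \<or> T2 \<subseteq> P" using ideal_gen_sup by blast
  then show "P \<in> V_on Spec T1 \<union> V_on Spec T2" using P(1) by (auto simp: V_on_def Spec_def)
qed

lemma spec_open_form:
  assumes "openin (spec_top::'a::ring_1 set topology) U"
  shows "\<exists>T. U = Spec - V_on Spec T"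
proof -
  have "generate_topology_on (insert Spec {Spec - V_on Spec S |S. True}) U"
    using assms unfolding zariski_topology_def by (rule openin_topology_generated_by)
  then show ?thesis
  proof induction
    case Empty
    have "V_on (Spec::'a set set) {} = Spec" by (auto simp: V_on_def)
    then show ?case by auto
  next
    case (Int a b)
    then obtain T1 T2 where "a = Spec - V_on Spec T1" "b = Spec - V_on Spec T2" by blast
    then have "a \<inter> b = Spec - (V_on Spec T1 \<union> V_on Spec T2)" by blast
    then show ?case unfolding V_Spec_Un by blast
  next
    case (UN K)
    then have "\<forall>k\<in>K. \<exists>T. k = Spec - V_on Spec T" by blast
    then obtain F where F: "\<forall>k\<in>K. k = Spec - V_on Spec (F k)" by metis
    have "\<Union>K = Spec - V_on Spec (\<Union>k\<in>K. F k)"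
    proof (intro equalityI subsetI)
      fix x assume "x \<in> \<Union>K"
      then obtain k where "k \<in> K" "x \<in> k" by blast
      then show "x \<in> Spec - V_on Spec (\<Union>k\<in>K. F k)" using F by (auto simp: V_on_def)
    next
      fix x assume "x \<in> Spec - V_on Spec (\<Union>k\<in>K. F k)"
      then obtain k where "k \<in> K" "\<not> F k \<subseteq> x" "x \<in> Spec" by (auto simp: V_on_def)
      then show "x \<in> \<Union>K" using F by (auto simp: V_on_def)
    qed
    then show ?case by blast
  next
    case (Basis s)
    then show ?case
    proof
      assume "s = Spec"
      moreover have "V_on (Spec::'a set set) UNIV = {}"
        by (auto simp: V_on_def Spec_def prime_ideal_def)
      ultimately show ?case by auto
    qed blast
  qed
qed

lemma act_zero:
  fixes act :: "'h \<Rightarrow> 'a::ring_1 \<Rightarrow> 'a"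
  assumes "\<forall>h a b. act h (a + b) = act h a + act h b"
  shows "act h 0 = 0"
proof -
  have "act h (0 + 0) = act h 0 + act h 0" using assms by blast
  then show ?thesis by simp
qed

lemma act_neg:
  fixes act :: "'h \<Rightarrow> 'a::ring_1 \<Rightarrow> 'a"
  assumes "\<forall>h a b. act h (a + b) = act h a + act h b"
  shows "act h (- x) = - act h x"
proof -
  have "act h (- x + x) = act h (-x) + act h x" using assms by blast
  then have "act h (-x) + act h x = 0" using act_zero[OF assms] by simp
  then show ?thesis using eq_neg_iff_add_eq_0 by blast
qed

lemma colon_H_ideal:
  assumes A: "module_algebra sH \<Delta> \<epsilon> sA act" and P: "two_sided_ideal P"
  shows "H_ideal act (colon_H act P)"
proof -
  have add: "\<forall>h a b. act h (a + b) = act h a + act h b"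
    and mul: "\<forall>x y a. act (x * y) a = act x (act y a)"
    and ma: "\<forall>h a b. act h (a * b) = sum_list (map (\<lambda>(h1, h2). act h1 a * act h2 b) (\<Delta> h))"
    using A unfolding module_algebra_def by blast+
  have "two_sided_ideal (colon_H act P)"
    unfolding two_sided_ideal_def
  proof (intro conjI ballI allI)
    show "0 \<in> colon_H act P" using P act_zero[OF add] by (simp add: colon_H_def two_sided_ideal_def)
  next
    fix x y assume "x \<in> colon_H act P" "y \<in> colon_H act P"
    then show "x + y \<in> colon_H act P" using P add by (simp add: colon_H_def two_sided_ideal_def)
  next
    fix x assume "x \<in> colon_H act P"
    then show "- x \<in> colon_H act P" using P act_neg[OF add] by (simp add: colon_H_def two_sided_ideal_def)
  next
    fix x r assume x: "x \<in> colon_H act P"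
    have "act h (r * x) \<in> P" for h
    proof -
      have "\<forall>y\<in>set (map (\<lambda>(h1, h2). act h1 r * act h2 x) (\<Delta> h)). y \<in> P"
        using x P by (auto simp: colon_H_def two_sided_ideal_def)
      then have "sum_list (map (\<lambda>(h1, h2). act h1 r * act h2 x) (\<Delta> h)) \<in> P" by (rule ideal_sum_list[OF P])
      then show ?thesis using ma by simp
    qed
    moreover have "act h (x * r) \<in> P" for h
    proof -
      have "\<forall>y\<in>set (map (\<lambda>(h1, h2). act h1 x * act h2 r) (\<Delta> h)). y \<in> P"
        using x P by (auto simp: colon_H_def two_sided_ideal_def)
      then have "sum_list (map (\<lambda>(h1, h2). act h1 x * act h2 r) (\<Delta> h)) \<in> P" by (rule ideal_sum_list[OF P])
      then show ?thesis using ma by simp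
    qed
    ultimately show "r * x \<in> colon_H act P" "x * r \<in> colon_H act P"
      by (simp_all add: colon_H_def)
  qed
  moreover have "\<forall>h. \<forall>x\<in>colon_H act P. act h x \<in> colon_H act P"
    using mul by (simp add: colon_H_def flip: mul)
  ultimately show ?thesis unfolding H_ideal_def by blast
qed

lemma colon_H_sub:
  assumes A: "module_algebra sH \<Delta> \<epsilon> sA act"
  shows "colon_H act P \<subseteq> P"
proof -
  have "\<forall>a. act 1 a = a" using A unfolding module_algebra_def by blast
  show ?thesis
  proof
    fix a assume "a \<in> colon_H act P"
    then have "act 1 a \<in> P" unfolding colon_H_def by blast
    then show "a \<in> P" using \<open>\<forall>a. act 1 a = a\<close> by simp
  qed
qed

lemma colon_H_prime:
  assumes A: "module_algebra sH \<Delta> \<epsilon> sA act" and P: "prime_ideal P"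
  shows "H_prime act (colon_H act P)"
proof -
  have Pi: "two_sided_ideal P" "P \<noteq> UNIV" using P unfolding prime_ideal_def by blast+
  have Hi: "H_ideal act (colon_H act P)" by (rule colon_H_ideal[OF A Pi(1)])
  have sub: "colon_H act P \<subseteq> P" by (rule colon_H_sub[OF A])
  have "1 \<notin> P"
  proof
    assume "1 \<in> P"
    then have "\<forall>r. r * 1 \<in> P" using Pi(1) unfolding two_sided_ideal_def by blast
    then show False using Pi(2) by auto
  qed
  then have ne: "colon_H act P \<noteq> UNIV" using sub by blast
  have "J = colon_H act P \<or> K = colon_H act P"
    if "H_ideal act J" "H_ideal act K" "colon_H act P \<subseteq> J" "colon_H act P \<subseteq> K"
       "ideal_prod J K \<subseteq> colon_H act P" for J K
  proof -
    have "J \<subseteq> P \<or> K \<subseteq> P" using P that sub unfolding prime_ideal_def H_ideal_def by blast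
    moreover have "J \<subseteq> colon_H act P" if "H_ideal act J" "J \<subseteq> P" for J
      using that unfolding H_ideal_def colon_H_def by blast
    ultimately show ?thesis using that by blast
  qed
  then show ?thesis unfolding H_prime_def using Hi ne by blast
qed


lemma colon_preimage:
  assumes A: "module_algebra sH \<Delta> \<epsilon> sA act"
  shows "colon_H act -` (H_Spec act - V_on (H_Spec act) S) \<inter> Spec
         = Spec - V_on Spec {act h s | h s. s \<in> S}"
proof (intro equalityI subsetI)
  fix P assume "P \<in> colon_H act -` (H_Spec act - V_on (H_Spec act) S) \<inter> Spec"
  then have "P \<in> Spec" "\<not> S \<subseteq> colon_H act P" by (auto simp: V_on_def)
  then show "P \<in> Spec - V_on Spec {act h s | h s. s \<in> S}"
    by (auto simp: V_on_def colon_H_def)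
next
  fix P assume P: "P \<in> Spec - V_on Spec {act h s | h s. s \<in> S}"
  then have "H_prime act (colon_H act P)" using colon_H_prime[OF A] by (simp add: Spec_def)
  moreover have "\<not> S \<subseteq> colon_H act P" using P by (auto simp: V_on_def colon_H_def)
  ultimately show "P \<in> colon_H act -` (H_Spec act - V_on (H_Spec act) S) \<inter> Spec"
    using P by (auto simp: V_on_def H_Spec_def)
qed

theorem lemma4p1:
  fixes sH :: "'k::field \<Rightarrow> 'h::ring_1 \<Rightarrow> 'h"
    and \<Delta> :: "'h \<Rightarrow> ('h \<times> 'h) list" and \<epsilon> :: "'h \<Rightarrow> 'k" and S :: "'h \<Rightarrow> 'h"
    and sA :: "'k \<Rightarrow> 'a::ring_1 \<Rightarrow> 'a" and act :: "'h \<Rightarrow> 'a \<Rightarrow> 'a"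
  assumes H: "hopf_algebra_bij_antipode sH \<Delta> \<epsilon> S"
    and A: "module_algebra sH \<Delta> \<epsilon> sA act"
  shows "continuous_map spec_top (hspec_top act) (colon_H act) \<and>
         (H_Spec act \<subseteq> Spec \<longrightarrow> hspec_top act = subtopology spec_top (H_Spec act)) \<and>
         ((colon_H act ` Spec = H_Spec act \<and>
           (\<forall>I \<in> H_Spec act. \<Inter> {P \<in> Spec. colon_H act P = I} = I))
          \<longrightarrow> quotient_map spec_top (hspec_top act) (colon_H act))"
proof -
  have img: "colon_H act ` Spec \<subseteq> H_Spec act"
    using colon_H_prime[OF A] by (auto simp: Spec_def H_Spec_def)
  have cont: "continuous_map spec_top (hspec_top act) (colon_H act)"
    unfolding zariski_topology_def[of "H_Spec act"]
  proof (rule continuous_on_generated_topo)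
    fix U assume "U \<in> insert (H_Spec act) {H_Spec act - V_on (H_Spec act) S' |S'. True}"
    then consider "U = H_Spec act" | S' where "U = H_Spec act - V_on (H_Spec act) S'" by blast
    then show "openin spec_top (colon_H act -` U \<inter> topspace spec_top)"
    proof cases
      case 1
      have "colon_H act -` U \<inter> topspace spec_top = topspace spec_top"
        using 1 img by auto
      then show ?thesis by (simp only: openin_topspace)
    next
      case 2
      have "colon_H act -` U \<inter> topspace spec_top = Spec - V_on Spec {act h s | h s. s \<in> S'}"
        using 2 colon_preimage[OF A] by simp
      then show ?thesis by (simp only: ztop_basic)
    qed
  next
    show "colon_H act ` topspace spec_top \<subseteq> \<Union> (insert (H_Spec act) {H_Spec act - V_on (H_Spec act) S' |S'. True})"
      using img by auto
  qed
  have quot: "quotient_map spec_top (hspec_top act) (colon_H act)"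
    if surj: "colon_H act ` Spec = H_Spec act"
      and fib: "\<forall>I \<in> H_Spec act. \<Inter> {P \<in> Spec. colon_H act P = I} = I"
  proof -
    have "openin (hspec_top act) U"
      if U: "U \<subseteq> H_Spec act" and o: "openin spec_top {x \<in> Spec. colon_H act x \<in> U}" for U
    proof -
      obtain T where T: "{x \<in> Spec. colon_H act x \<in> U} = Spec - V_on Spec T"
        using spec_open_form[OF o[unfolded ztop_topspace]] by blast
      define T' where "T' = \<Inter> (V_on Spec T)"
      have "U = H_Spec act - V_on (H_Spec act) T'"
      proof (intro equalityI subsetI)
        fix I assume I: "I \<in> U"
        then have IH: "I \<in> H_Spec act" using U by blast
        then have "I \<in> colon_H act ` Spec" using surj by simp
        then obtain P where P: "P \<in> Spec" "colon_H act P = I" by (rule imageE) simp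
        have "I \<subseteq> P" using P colon_H_sub[OF A] by blast
        show "I \<in> H_Spec act - V_on (H_Spec act) T'"
        proof (rule ccontr)
          assume "I \<notin> H_Spec act - V_on (H_Spec act) T'"
          then have "T' \<subseteq> I" using IH by (simp add: V_on_def)
          then have "T' \<subseteq> P" using \<open>I \<subseteq> P\<close> by blast
          moreover have "T \<subseteq> T'" unfolding T'_def V_on_def by blast
          ultimately have "P \<in> V_on Spec T" using P by (auto simp: V_on_def)
          then have "P \<notin> {x \<in> Spec. colon_H act x \<in> U}" using T by blast
          then show False using P I by blast
        qed
      next
        fix I assume I: "I \<in> H_Spec act - V_on (H_Spec act) T'"
        show "I \<in> U"
        proof (rule ccontr)
          assume nU: "I \<notin> U"
          have "V_on Spec T \<supseteq> {P \<in> Spec. colon_H act P = I}"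
          proof
            fix P assume "P \<in> {P \<in> Spec. colon_H act P = I}"
            then have "P \<in> Spec" "P \<notin> {x \<in> Spec. colon_H act x \<in> U}" using nU by auto
            then show "P \<in> V_on Spec T" using T by blast
          qed
          then have "T' \<subseteq> \<Inter> {P \<in> Spec. colon_H act P = I}" unfolding T'_def by blast
          then have "T' \<subseteq> I" using fib I by auto
          then show False using I by (simp add: V_on_def)
        qed
      qed
      then show ?thesis by (simp only: ztop_basic)
    qed
    moreover have "openin spec_top {x \<in> Spec. colon_H act x \<in> U}"
      if "openin (hspec_top act) U" for U
      using cont that unfolding continuous_map_def by (simp add: ztop_topspace)
    ultimately show ?thesis unfolding quotient_map_def using surj by auto
  qed
  show ?thesis using cont ztop_sub quot by blast
qed

end
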